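(* Let $M$ be a complete non-ambiguous matrix (CNM) of size $n\ge 1$ and let $\pi(M)\in S_n$ be its associated permutation. Then $\det(M)=\operatorname{sgn}(\pi(M))$.
   Context: A complete non-ambiguous matrix (CNM) of size $n$ is an $n\times n$ matrix $M=(m_{i,j})$ with entries in $\{0,1\}$ whose support $T=\{(i,j): m_{i,j}=1\}$ (whose elements are called vertices) satisfies: (1) $(1,1)\in T$ (the root); (2) for every $p=(i,j)\in T$ with $p\neq(1,1)$, exactly one of the following holds: there is $(i',j)\in T$ with $i'<i$, or there is $(i,j')\in T$ with $j'<j$; (3) every row and every column of $M$ contains at least one vertex; (4) completeness: define the parent of $p=(i,j)\neq(1,1)$ to be $(i',j)$ with $i'<i$ maximal if such a vertex exists, and otherwise $(i,j')$ with $j'<j$ maximal; then every vertex is the parent of either zero or exactly two vertices. A vertex with no children is a leaf. (CNMs are exactly the matrix encodings of complete non-ambiguous trees.) Each row and each column of a CNM contains exactly one leaf, so the leaf matrix $p(M)$, obtained from $M$ by replacing all non-leaf vertices by $0$, is a permutation matrix; the associated permutation $\pi(M)\in S_n$ is the permutation with $\pi(M)(i)=j$ iff $(i,j)$ is a leaf. $\operatorname{sgn}$ denotes the sign of a permutation. *)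

theory Defs
  imports "Jordan_Normal_Form.Determinant" "HOL-Combinatorics.Permutations"
begin

text \<open>A CNM of size n is represented by its support T (set of vertices),
  with 1-based indices: T \<subseteq> {1..n} \<times> {1..n}.\<close>

definition cnm_parent :: "(nat \<times> nat) set \<Rightarrow> nat \<times> nat \<Rightarrow> nat \<times> nat" where
  "cnm_parent T p = (case p of (i, j) \<Rightarrow>
     if (\<exists>i'<i. (i', j) \<in> T) then (GREATEST i'. i' < i \<and> (i', j) \<in> T, j)
     else (i, GREATEST j'. j' < j \<and> (i, j') \<in> T))"

definition cnm_children :: "(nat \<times> nat) set \<Rightarrow> nat \<times> nat \<Rightarrow> (nat \<times> nat) set" where
  "cnm_children T p = {q \<in> T. q \<noteq> (1, 1) \<and> cnm_parent T q = p}"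

definition is_cnm :: "nat \<Rightarrow> (nat \<times> nat) set \<Rightarrow> bool" where
  "is_cnm n T \<longleftrightarrow>
     T \<subseteq> {1..n} \<times> {1..n} \<and>
     (1, 1) \<in> T \<and>
     (\<forall>(i, j) \<in> T. (i, j) \<noteq> (1, 1) \<longrightarrow>
        ((\<exists>i'<i. (i', j) \<in> T) \<noteq> (\<exists>j'<j. (i, j') \<in> T))) \<and>
     (\<forall>i \<in> {1..n}. \<exists>j. (i, j) \<in> T) \<and>
     (\<forall>j \<in> {1..n}. \<exists>i. (i, j) \<in> T) \<and>
     (\<forall>p \<in> T. card (cnm_children T p) = 0 \<or> card (cnm_children T p) = 2)"

definition cnm_leaves :: "(nat \<times> nat) set \<Rightarrow> (nat \<times> nat) set" where
  "cnm_leaves T = {p \<in> T. cnm_children T p = {}}"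

definition cnm_perm :: "nat \<Rightarrow> (nat \<times> nat) set \<Rightarrow> nat \<Rightarrow> nat" where
  "cnm_perm n T i = (if i \<in> {1..n} then (THE j. (i, j) \<in> cnm_leaves T) else i)"

text \<open>The matrix M as an n\<times>n integer matrix (Jordan_Normal_Form, 0-based
  indices: entry (i,j) of the JNF matrix is m_{i+1,j+1}).\<close>
definition cnm_matrix :: "nat \<Rightarrow> (nat \<times> nat) set \<Rightarrow> int mat" where
  "cnm_matrix n T = mat n n (\<lambda>(i, j). if (i + 1, j + 1) \<in> T then 1 else 0)"

end

theory Submission imports Defs begin

lemma cnmD:
  assumes "is_cnm n T"
  shows "T \<subseteq> {1..n} \<times> {1..n}" "(1,1) \<in> T"
    "\<And>i j. (i,j) \<in> T \<Longrightarrow> (i,j) \<noteq> (1,1) \<Longrightarrow> (\<exists>i'<i. (i', j) \<in> T) \<noteq> (\<exists>j'<j. (i, j') \<in> T)"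
    "\<And>i. i \<in> {1..n} \<Longrightarrow> \<exists>j. (i,j) \<in> T"
    "\<And>j. j \<in> {1..n} \<Longrightarrow> \<exists>i. (i,j) \<in> T"
    "\<And>p. p \<in> T \<Longrightarrow> card (cnm_children T p) = 0 \<or> card (cnm_children T p) = 2"
  using assms unfolding is_cnm_def by blast+

lemma cnm_fin: "is_cnm n T \<Longrightarrow> finite T"
  by (rule finite_subset[OF cnmD(1)]) auto

lemma col_child:
  assumes c: "is_cnm n T" and ab: "(a,b) \<in> T" and ib: "(i,b) \<in> T" "a < i"
  shows "cnm_children T (a,b) \<noteq> {}"
proof -
  define i0 where "i0 = (LEAST k. a < k \<and> (k,b) \<in> T)"
  have i0: "a < i0" "(i0,b) \<in> T" using LeastI[of "\<lambda>k. a < k \<and> (k,b) \<in> T" i] ib i0_def by auto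
  have nb: "\<And>k. a < k \<Longrightarrow> k < i0 \<Longrightarrow> (k,b) \<notin> T" using not_less_Least i0_def by blast
  have g: "(GREATEST i'. i' < i0 \<and> (i', b) \<in> T) = a"
    by (rule Greatest_equality) (use ab i0 nb in \<open>auto simp: not_less[symmetric]\<close>)
  have "cnm_parent T (i0,b) = (a,b)"
    unfolding cnm_parent_def using g ab i0 by auto
  moreover have "(i0,b) \<noteq> (1,1)" using i0 ab cnmD(1)[OF c] by auto
  ultimately have "(i0,b) \<in> cnm_children T (a,b)" unfolding cnm_children_def using i0 by auto
  thus ?thesis by auto
qed

lemma row_child:
  assumes c: "is_cnm n T" and ab: "(a,b) \<in> T" and ib: "(a,j) \<in> T" "b < j"
  shows "cnm_children T (a,b) \<noteq> {}"
proof -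
  define j0 where "j0 = (LEAST k. b < k \<and> (a,k) \<in> T)"
  have j0: "b < j0" "(a,j0) \<in> T" using LeastI[of "\<lambda>k. b < k \<and> (a,k) \<in> T" j] ib j0_def by auto
  have nb: "\<And>k. b < k \<Longrightarrow> k < j0 \<Longrightarrow> (a,k) \<notin> T" using not_less_Least j0_def by blast
  have g: "(GREATEST j'. j' < j0 \<and> (a, j') \<in> T) = b"
    by (rule Greatest_equality) (use ab j0 nb in \<open>auto simp: not_less[symmetric]\<close>)
  have ne: "(a,j0) \<noteq> (1,1)" using j0 ab cnmD(1)[OF c] by auto
  have "\<not> (\<exists>i'<a. (i', j0) \<in> T)" using cnmD(3)[OF c j0(2) ne] j0 ab by auto
  hence "cnm_parent T (a,j0) = (a,b)"
    unfolding cnm_parent_def using g by auto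
  hence "(a,j0) \<in> cnm_children T (a,b)" unfolding cnm_children_def using j0 ne by auto
  thus ?thesis by auto
qed

lemma child_shape:
  assumes c: "is_cnm n T" and q: "(i,j) \<in> cnm_children T (a,b)"
  shows "(j = b \<and> a < i \<and> (GREATEST i'. i' < i \<and> (i', j) \<in> T) = a)
       \<or> (i = a \<and> b < j \<and> (GREATEST j'. j' < j \<and> (i, j') \<in> T) = b)"
proof -
  have qT: "(i,j) \<in> T" and ne: "(i,j) \<noteq> (1,1)" and par: "cnm_parent T (i,j) = (a,b)"
    using q unfolding cnm_children_def by auto
  show ?thesis
  proof (cases "\<exists>i'<i. (i', j) \<in> T")
    case True
    then obtain k where k: "k < i" "(k,j) \<in> T" by auto
    have "(GREATEST i'. i' < i \<and> (i', j) \<in> T) < i"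
      using GreatestI_nat[of "\<lambda>i'. i' < i \<and> (i', j) \<in> T" k i] k by auto
    thus ?thesis using par True unfolding cnm_parent_def by auto
  next
    case False
    then have "\<exists>j'<j. (i, j') \<in> T" using cnmD(3)[OF c qT ne] by auto
    then obtain k where k: "k < j" "(i,k) \<in> T" by auto
    have "(GREATEST j'. j' < j \<and> (i, j') \<in> T) < j"
      using GreatestI_nat[of "\<lambda>j'. j' < j \<and> (i, j') \<in> T" k j] k by auto
    thus ?thesis using par False unfolding cnm_parent_def by auto
  qed
qed

lemma greatest_le:
  assumes "P (k::nat)" "\<And>y. P y \<Longrightarrow> y < m"
  shows "k \<le> (GREATEST y. P y)"
  using Greatest_le_nat[of P k m] assms by fastforce

lemma bottom_leaf:
  assumes c: "is_cnm n T" and ab: "(a,b) \<in> T" and bot: "\<And>i. (i,b) \<in> T \<Longrightarrow> i \<le> a"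
  shows "cnm_children T (a,b) = {}"
proof (rule ccontr)
  assume ne: "cnm_children T (a,b) \<noteq> {}"
  then obtain q where q: "q \<in> cnm_children T (a,b)" by auto
  obtain qi qj where qq: "q = (qi,qj)" by fastforce
  have shape: "\<And>i j. (i,j) \<in> cnm_children T (a,b) \<Longrightarrow>
      i = a \<and> b < j \<and> (GREATEST j'. j' < j \<and> (i, j') \<in> T) = b"
  proof -
    fix i j assume h: "(i,j) \<in> cnm_children T (a,b)"
    hence "(i,j) \<in> T" unfolding cnm_children_def by auto
    thus "i = a \<and> b < j \<and> (GREATEST j'. j' < j \<and> (i, j') \<in> T) = b"
      using child_shape[OF c h] bot by fastforce
  qed
  have "cnm_children T (a,b) = {q}"
  proof safe
    fix i j assume h: "(i,j) \<in> cnm_children T (a,b)"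
    have s1: "i = a" "b < j" "(GREATEST j'. j' < j \<and> (i, j') \<in> T) = b" using shape[OF h] by auto
    have s2: "qi = a" "b < qj" "(GREATEST j'. j' < qj \<and> (qi, j') \<in> T) = b" using shape q qq by auto
    have hT: "(i,j) \<in> T" "(qi,qj) \<in> T" using h q qq unfolding cnm_children_def by auto
    have "\<not> j < qj"
    proof
      assume "j < qj"
      hence "j \<le> (GREATEST j'. j' < qj \<and> (qi, j') \<in> T)"
        using greatest_le[of "\<lambda>j'. j' < qj \<and> (qi, j') \<in> T" j qj] hT s1 s2 by auto
      thus False using s1 s2 by auto
    qed
    moreover have "\<not> qj < j"
    proof
      assume "qj < j"
      hence "qj \<le> (GREATEST j'. j' < j \<and> (i, j') \<in> T)"
        using greatest_le[of "\<lambda>j'. j' < j \<and> (i, j') \<in> T" qj j] hT s1 s2 by auto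
      thus False using s1 s2 by auto
    qed
    ultimately show "(i,j) = q" using s1 s2 qq by auto
  qed (use q in auto)
  hence "card (cnm_children T (a,b)) = 1" by simp
  thus False using cnmD(6)[OF c ab] by auto
qed

lemma right_leaf:
  assumes c: "is_cnm n T" and ab: "(a,b) \<in> T" and rt: "\<And>j. (a,j) \<in> T \<Longrightarrow> j \<le> b"
  shows "cnm_children T (a,b) = {}"
proof (rule ccontr)
  assume ne: "cnm_children T (a,b) \<noteq> {}"
  then obtain q where q: "q \<in> cnm_children T (a,b)" by auto
  obtain qi qj where qq: "q = (qi,qj)" by fastforce
  have shape: "\<And>i j. (i,j) \<in> cnm_children T (a,b) \<Longrightarrow>
      j = b \<and> a < i \<and> (GREATEST i'. i' < i \<and> (i', j) \<in> T) = a"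
  proof -
    fix i j assume h: "(i,j) \<in> cnm_children T (a,b)"
    hence "(i,j) \<in> T" unfolding cnm_children_def by auto
    thus "j = b \<and> a < i \<and> (GREATEST i'. i' < i \<and> (i', j) \<in> T) = a"
      using child_shape[OF c h] rt by fastforce
  qed
  have "cnm_children T (a,b) = {q}"
  proof safe
    fix i j assume h: "(i,j) \<in> cnm_children T (a,b)"
    have s1: "j = b" "a < i" "(GREATEST i'. i' < i \<and> (i', j) \<in> T) = a" using shape[OF h] by auto
    have s2: "qj = b" "a < qi" "(GREATEST i'. i' < qi \<and> (i', qj) \<in> T) = a" using shape q qq by auto
    have hT: "(i,j) \<in> T" "(qi,qj) \<in> T" using h q qq unfolding cnm_children_def by auto
    have "\<not> i < qi"
    proof
      assume "i < qi"
      hence "i \<le> (GREATEST i'. i' < qi \<and> (i', qj) \<in> T)"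
        using greatest_le[of "\<lambda>i'. i' < qi \<and> (i', qj) \<in> T" i qi] hT s1 s2 by auto
      thus False using s1 s2 by auto
    qed
    moreover have "\<not> qi < i"
    proof
      assume "qi < i"
      hence "qi \<le> (GREATEST i'. i' < i \<and> (i', j) \<in> T)"
        using greatest_le[of "\<lambda>i'. i' < i \<and> (i', j) \<in> T" qi i] hT s1 s2 by auto
      thus False using s1 s2 by auto
    qed
    ultimately show "(i,j) = q" using s1 s2 qq by auto
  qed (use q in auto)
  hence "card (cnm_children T (a,b)) = 1" by simp
  thus False using cnmD(6)[OF c ab] by auto
qed


lemma leaf_bot:
  assumes c: "is_cnm n T" and ab: "(a,b) \<in> cnm_leaves T" and ib: "(i,b) \<in> T"
  shows "i \<le> a"
  using col_child[OF c _ ib] ab unfolding cnm_leaves_def by force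

lemma leaf_right:
  assumes c: "is_cnm n T" and ab: "(a,b) \<in> cnm_leaves T" and ib: "(a,j) \<in> T"
  shows "j \<le> b"
  using row_child[OF c _ ib] ab unfolding cnm_leaves_def by force

lemma row_leaf_ex1:
  assumes c: "is_cnm n T" and i: "i \<in> {1..n}"
  shows "\<exists>!j. (i,j) \<in> cnm_leaves T"
proof -
  define R where "R = {j. (i,j) \<in> T}"
  have fin: "finite R" unfolding R_def
    by (rule finite_subset[of _ "{1..n}"]) (use cnmD(1)[OF c] in auto)
  have ne: "R \<noteq> {}" using cnmD(4)[OF c i] R_def by auto
  define j where "j = Max R"
  have jT: "(i,j) \<in> T" using Max_in[OF fin ne] j_def R_def by auto
  have rt: "\<And>j'. (i,j') \<in> T \<Longrightarrow> j' \<le> j" using Max_ge[OF fin] j_def R_def by auto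
  have "(i,j) \<in> cnm_leaves T" using right_leaf[OF c jT rt] jT unfolding cnm_leaves_def by auto
  moreover have "j' = j" if l: "(i,j') \<in> cnm_leaves T" for j'
  proof -
    have "(i,j') \<in> T" using l unfolding cnm_leaves_def by auto
    hence "j' \<le> j" using rt by auto
    moreover have "j \<le> j'" using leaf_right[OF c l jT] .
    ultimately show ?thesis by simp
  qed
  ultimately show ?thesis by (rule ex1I)
qed

lemma perm_leaf:
  assumes c: "is_cnm n T" and i: "i \<in> {1..n}"
  shows "(i, cnm_perm n T i) \<in> cnm_leaves T"
  using theI'[OF row_leaf_ex1[OF c i]] i unfolding cnm_perm_def by auto

lemma perm_eq:
  assumes c: "is_cnm n T" and l: "(i,j) \<in> cnm_leaves T"
  shows "cnm_perm n T i = j"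
proof -
  have "(i,j) \<in> T" using l unfolding cnm_leaves_def by auto
  hence i: "i \<in> {1..n}" using cnmD(1)[OF c] by auto
  show ?thesis unfolding cnm_perm_def using i the1_equality[OF row_leaf_ex1[OF c i] l] by simp
qed

lemma perm_permutes:
  assumes c: "is_cnm n T"
  shows "cnm_perm n T permutes {1..n}"
proof (rule inj_imp_permutes)
  show "inj_on (cnm_perm n T) {1..n}"
  proof (rule inj_onI)
    fix x y assume x: "x \<in> {1..n}" and y: "y \<in> {1..n}" and e: "cnm_perm n T x = cnm_perm n T y"
    have lx: "(x, cnm_perm n T x) \<in> cnm_leaves T" using perm_leaf[OF c x] .
    have ly: "(y, cnm_perm n T x) \<in> cnm_leaves T" using perm_leaf[OF c y] e by simp
    have "x \<le> y" using leaf_bot[OF c ly] lx unfolding cnm_leaves_def by auto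
    moreover have "y \<le> x" using leaf_bot[OF c lx] ly unfolding cnm_leaves_def by auto
    ultimately show "x = y" by simp
  qed
  show "cnm_perm n T x \<in> {1..n}" if x: "x \<in> {1..n}" for x
  proof -
    have "(x, cnm_perm n T x) \<in> T" using perm_leaf[OF c x] unfolding cnm_leaves_def by auto
    thus ?thesis using cnmD(1)[OF c] by auto
  qed
  show "\<And>i. i \<notin> {1..n} \<Longrightarrow> cnm_perm n T i = i" unfolding cnm_perm_def by auto
qed auto

lemma matching_unique:
  assumes c: "is_cnm n T" and inj: "inj_on s {1..n}" and m: "\<And>i. i \<in> {1..n} \<Longrightarrow> (i, s i) \<in> T"
  shows "i \<in> {1..n} \<Longrightarrow> s i = cnm_perm n T i"
proof (induction "n - i" arbitrary: i rule: less_induct)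
  case less
  note i = less.prems
  show ?case
  proof (rule ccontr)
    assume ne: "s i \<noteq> cnm_perm n T i"
    let ?c = "s i"
    have iT: "(i, ?c) \<in> T" using m i .
    have nl: "(i, ?c) \<notin> cnm_leaves T" using perm_eq[OF c, of i "s i"] ne by auto
    have "\<not> (\<forall>k. (k,?c) \<in> T \<longrightarrow> k \<le> i)"
      using bottom_leaf[OF c iT] iT nl unfolding cnm_leaves_def by auto
    then obtain k0 where k0: "(k0,?c) \<in> T" "i < k0" by auto
    define C where "C = {k. (k,?c) \<in> T}"
    have fin: "finite C" unfolding C_def
      by (rule finite_subset[of _ "{1..n}"]) (use cnmD(1)[OF c] in auto)
    define k where "k = Max C"
    have kT: "(k,?c) \<in> T" using Max_in[OF fin] k0 k_def C_def by auto
    have bt: "\<And>k'. (k',?c) \<in> T \<Longrightarrow> k' \<le> k" using Max_ge[OF fin] k_def C_def by auto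
    have ik: "i < k" using bt[OF k0(1)] k0 by auto
    have kn: "k \<in> {1..n}" using kT cnmD(1)[OF c] by auto
    have kl: "(k,?c) \<in> cnm_leaves T" using bottom_leaf[OF c kT bt] kT unfolding cnm_leaves_def by auto
    have pk: "cnm_perm n T k = ?c" using perm_eq[OF c kl] .
    have "s k = cnm_perm n T k" using less.hyps[of k] kn ik i by auto
    hence "s k = s i" using pk by simp
    hence "k = i" using inj kn i by (meson inj_onD)
    thus False using ik by simp
  qed
qed


theorem proposition2p1:
  fixes n :: nat and T :: "(nat \<times> nat) set"
  assumes "n \<ge> 1" and "is_cnm n T"
  shows "det (cnm_matrix n T) = sign (cnm_perm n T)"
proof -
  note c = assms(2)
  let ?pi = "cnm_perm n T"
  let ?M = "cnm_matrix n T"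
  define pi0 where "pi0 = map_permutation {1..n} (\<lambda>x. x - 1) ?pi"
  have bij: "bij_betw (\<lambda>x. x - 1) {1..n} {0..<n}"
    by (rule bij_betw_byWitness[where f'=Suc]) auto
  have inj: "inj_on (\<lambda>x. x - 1) {1..n}" using bij bij_betw_def by blast
  have pp: "?pi permutes {1..n}" using perm_permutes[OF c] .
  have p0: "pi0 permutes {0..<n}" unfolding pi0_def
    using map_permutation_permutes[OF bij pp] .
  have s0: "sign pi0 = sign ?pi" unfolding pi0_def
    using sign_map_permutation[OF inj pp] by simp
  have v0: "pi0 i = ?pi (i+1) - 1" if "i < n" for i
    using map_permutation_apply[OF inj, of "i+1" ?pi] that unfolding pi0_def by auto
  have Mi: "?M $$ (i,j) = (if (i+1,j+1) \<in> T then 1 else 0)" if "i < n" "j < n" for i j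
    using that unfolding cnm_matrix_def by simp
  define f where "f p = (of_int (sign p) :: int) * (\<Prod>i = 0..<n. ?M $$ (i, p i))" for p
  define P where "P = {p. p permutes {0..<n}}"
  have det: "det ?M = sum f P" unfolding f_def P_def
    by (rule det_def') (simp add: cnm_matrix_def)
  have z: "f p = 0" if pP: "p \<in> P - {pi0}" for p
  proof (rule ccontr)
    assume "f p \<noteq> 0"
    hence pr: "(\<Prod>i = 0..<n. ?M $$ (i, p i)) \<noteq> 0" unfolding f_def by auto
    have pper: "p permutes {0..<n}" using pP P_def by auto
    have T1: "(i+1, p i+1) \<in> T" if i: "i < n" for i
    proof -
      have "?M $$ (i, p i) \<noteq> 0" using pr i by (auto simp: prod_zero_iff)
      moreover have "p i < n" using permutes_in_image[OF pper] i by auto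
      ultimately show ?thesis using Mi[OF i] by (auto split: if_splits)
    qed
    define s where "s x = p (x - 1) + 1" for x
    have sinj: "inj_on s {1..n}"
    proof (rule inj_onI)
      fix x y assume x: "x \<in> {1..n}" and y: "y \<in> {1..n}" and e: "s x = s y"
      hence "p (x-1) = p (y-1)" unfolding s_def by simp
      hence "x - 1 = y - 1" using permutes_inj[OF pper] by (meson injD)
      thus "x = y" using x y by auto
    qed
    have sm: "(x, s x) \<in> T" if x: "x \<in> {1..n}" for x
      using T1[of "x-1"] x unfolding s_def by auto
    have "p i = pi0 i" for i
    proof (cases "i < n")
      case True
      have "s (i+1) = ?pi (i+1)" using matching_unique[OF c sinj sm] True by auto
      thus ?thesis using v0[OF True] unfolding s_def by simp
    next
      case False
      have "p i = i" using permutes_not_in[OF pper] False by auto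
      moreover have "pi0 i = i" using permutes_not_in[OF p0] False by auto
      ultimately show ?thesis by simp
    qed
    hence "p = pi0" by auto
    thus False using pP by auto
  qed
  have one: "(\<Prod>i = 0..<n. ?M $$ (i, pi0 i)) = 1"
  proof (rule prod.neutral, rule ballI)
    fix i assume "i \<in> {0..<n}"
    hence i: "i < n" by auto
    have l: "(i+1, ?pi (i+1)) \<in> T" using perm_leaf[OF c, of "i+1"] i unfolding cnm_leaves_def by auto
    hence r: "?pi (i+1) \<in> {1..n}" using cnmD(1)[OF c] by auto
    have "pi0 i < n" using permutes_in_image[OF p0] i by auto
    moreover have "pi0 i + 1 = ?pi (i+1)" using v0[OF i] r by auto
    ultimately show "?M $$ (i, pi0 i) = 1" using Mi[OF i] l by auto
  qed
  have "pi0 \<in> P" using p0 P_def by auto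
  moreover have fin: "finite P" unfolding P_def by (rule finite_permutations) simp
  ultimately have "sum f P = f pi0 + sum f (P - {pi0})" by (simp add: sum.remove)
  also have "sum f (P - {pi0}) = 0" using z by (intro sum.neutral) blast
  finally show ?thesis using det one s0 unfolding f_def by simp
qed

end
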